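(* Let $A>0$ be a constant and let $\mathcal{SC}$ denote the class of Carleson measures on $\mathbb{R}^+\times\mathbb{R}^d$ of the form $\mu=\mu_\beta$ with $\beta\in L^\infty(\mathbb{R}^+\times\mathbb{R}^d)$ satisfying $\|\beta\|^2_{L^\infty}\le A\|\mu\|_{\mathcal C}$, with norm $\|\mu\|_{\mathcal{SC}}:=\|\mu\|_{\mathcal C}$. Let $\phi:\mathbb{R}^d\to\mathbb{R}^d$ be a bi-Lipschitz homeomorphism preserving Lebesgue measure. Then there is a constant $C$ depending only on $d$ and $A$ such that for every $\mu\in\mathcal{SC}$, $$\|\mu^{\sharp\phi}\|_{\mathcal C}\le C\,\log(K_\phi)\,\|\mu\|_{\mathcal{SC}}.$$
   Context: For a bi-Lipschitz homeomorphism $\phi$ of $\mathbb{R}^d$, $K_\phi:=\sup_{x\neq y}\left(\frac{|\phi(x)-\phi(y)|}{|x-y|}+\frac{|x-y|}{|\phi(x)-\phi(y)|}\right)$ ($\ge 2$); "preserving Lebesgue measure" means $|\phi(A)|=|A|$ for all measurable $A$. For a ball $B\subset\mathbb{R}^d$ of radius $r_B$, $T(B)=\{(t,x):x\in B,\ 0<t\le r_B\}$; for a measure $\mu$ on $\mathbb{R}^+\times\mathbb{R}^d$, $\|\mu\|_{\mathcal C}=\sup_B|B|^{-1}\mu(T(B))$, and $\mu$ is Carleson if this is finite. For measurable $\beta$, $d\mu_\beta(t,x)=|\beta(t,x)|^2\frac{dt\,dx}{t}$. The pull-back is $\mu^{\sharp\phi}(I\times E)=\mu(I\times\phi^{-1}(E))$,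 so $\mu_\beta^{\sharp\phi}=\mu_{\beta^\phi}$ with $\beta^\phi(t,x)=\beta(t,\phi(x))$. *)

theory Defs
  imports "HOL-Analysis.Analysis" "HOL-Probability.Essential_Supremum"
begin

definition halfspace :: "(real \<times> 'a::euclidean_space) measure" where
  "halfspace = restrict_space lebesgue ({0<..} \<times> UNIV)"

definition mu_beta :: "(real \<times> 'a::euclidean_space \<Rightarrow> real) \<Rightarrow> (real \<times> 'a) measure" where
  "mu_beta \<beta> = density halfspace (\<lambda>(t,x). ennreal ((\<beta> (t,x))\<^sup>2 / t))"

definition tent :: "'a::euclidean_space \<Rightarrow> real \<Rightarrow> (real \<times> 'a) set" where
  "tent c r = {(t,x). x \<in> ball c r \<and> 0 < t \<and> t \<le> r}"

definition carleson_norm :: "(real \<times> 'a::euclidean_space) measure \<Rightarrow> ennreal" where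
  "carleson_norm \<mu> = (SUP (c,r) \<in> UNIV \<times> {0<..}. emeasure \<mu> (tent c r) / emeasure lebesgue (ball c r))"

definition Linf_norm :: "(real \<times> 'a::euclidean_space \<Rightarrow> real) \<Rightarrow> ereal" where
  "Linf_norm \<beta> = esssup halfspace (\<lambda>p. ereal \<bar>\<beta> p\<bar>)"

definition bi_lipschitz_homeo :: "('a::euclidean_space \<Rightarrow> 'a) \<Rightarrow> bool" where
  "bi_lipschitz_homeo \<phi> \<longleftrightarrow> bij \<phi> \<and> (\<exists>L. L-lipschitz_on UNIV \<phi>) \<and> (\<exists>L. L-lipschitz_on UNIV (inv \<phi>))"

definition preserves_lebesgue :: "('a::euclidean_space \<Rightarrow> 'a) \<Rightarrow> bool" where
  "preserves_lebesgue \<phi> \<longleftrightarrow> (\<forall>A \<in> sets lebesgue. \<phi> ` A \<in> sets lebesgue \<and> emeasure lebesgue (\<phi> ` A) = emeasure lebesgue A)"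

definition K_const :: "('a::euclidean_space \<Rightarrow> 'a) \<Rightarrow> real" where
  "K_const \<phi> = (SUP (x,y) \<in> {(x,y). x \<noteq> y}. dist (\<phi> x) (\<phi> y) / dist x y + dist x y / dist (\<phi> x) (\<phi> y))"

end

theory Submission
  imports Defs
begin


lemma K_facts:
  fixes \<phi> :: "'a::euclidean_space \<Rightarrow> 'a"
  assumes "bi_lipschitz_homeo \<phi>"
  shows "K_const \<phi> \<ge> 2" "\<And>x y. dist (\<phi> x) (\<phi> y) \<le> K_const \<phi> * dist x y"
    "\<And>x y. dist x y \<le> K_const \<phi> * dist (\<phi> x) (\<phi> y)"
proof -
  obtain L1 L2 where bij: "bij \<phi>" and L1: "L1-lipschitz_on UNIV \<phi>" and L2: "L2-lipschitz_on UNIV (inv \<phi>)"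
    using assms unfolding bi_lipschitz_homeo_def by blast
  define q where "q = (\<lambda>(x::'a,y). dist (\<phi> x) (\<phi> y) / dist x y + dist x y / dist (\<phi> x) (\<phi> y))"
  have K: "K_const \<phi> = (SUP p \<in> {(x,y). x \<noteq> y}. q p)"
    unfolding K_const_def q_def by simp
  have inj: "inj \<phi>" using bij bij_is_inj by blast
  have bnd: "q (x,y) \<le> L1 + L2" if "x \<noteq> y" for x y
  proof -
    have a: "dist (\<phi> x) (\<phi> y) > 0" using inj that by (simp add: inj_eq)
    have b: "dist x y > 0" using that by simp
    have "dist (\<phi> x) (\<phi> y) \<le> L1 * dist x y" using L1 by (simp add: lipschitz_onD)
    hence 1: "dist (\<phi> x) (\<phi> y) / dist x y \<le> L1" using b by (simp add: divide_le_eq)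
    have "dist (inv \<phi> (\<phi> x)) (inv \<phi> (\<phi> y)) \<le> L2 * dist (\<phi> x) (\<phi> y)" using L2 by (simp add: lipschitz_onD)
    hence "dist x y \<le> L2 * dist (\<phi> x) (\<phi> y)" using inj by simp
    hence 2: "dist x y / dist (\<phi> x) (\<phi> y) \<le> L2" using a by (simp add: divide_le_eq)
    show ?thesis using 1 2 unfolding q_def by simp
  qed
  have bdd: "bdd_above (q ` {(x,y). x \<noteq> y})"
    using bnd by (intro bdd_aboveI[where M="L1+L2"]) auto
  have upper: "q (x,y) \<le> K_const \<phi>" if "x \<noteq> y" for x y
    unfolding K by (rule cSUP_upper[OF _ bdd]) (use that in auto)
  obtain b :: 'a where b: "b \<in> Basis" using nonempty_Basis by blast
  hence b0: "b \<noteq> 0" by (auto simp: nonzero_Basis)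
  have ge2: "q (x,y) \<ge> 2" if "x \<noteq> y" for x y
  proof -
    define a where "a = dist (\<phi> x) (\<phi> y)"
    define c where "c = dist x y"
    have a: "a > 0" using inj that by (simp add: inj_eq a_def)
    have c: "c > 0" using that by (simp add: c_def)
    have "(a - c)^2 \<ge> 0" by simp
    hence "a/c + c/a \<ge> 2" using a c by (simp add: field_simps power2_eq_square)
    thus ?thesis unfolding q_def a_def c_def by simp
  qed
  show "K_const \<phi> \<ge> 2" using ge2[of b 0] upper[of b 0] b0 by simp
  fix x y
  show "dist (\<phi> x) (\<phi> y) \<le> K_const \<phi> * dist x y"
  proof (cases "x = y")
    case False
    have a: "dist (\<phi> x) (\<phi> y) > 0" using inj False by (simp add: inj_eq)
    have c: "dist x y > 0" using False by simp
    have "dist (\<phi> x) (\<phi> y) / dist x y \<le> K_const \<phi>" using upper[OF False] a c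
      unfolding q_def case_prod_conv using divide_nonneg_nonneg[OF zero_le_dist zero_le_dist, of x y "\<phi> x" "\<phi> y"] by linarith
    thus ?thesis using c by (simp add: divide_le_eq mult.commute)
  qed simp
  show "dist x y \<le> K_const \<phi> * dist (\<phi> x) (\<phi> y)"
  proof (cases "x = y")
    case False
    have a: "dist (\<phi> x) (\<phi> y) > 0" using inj False by (simp add: inj_eq)
    have c: "dist x y > 0" using False by simp
    have "dist x y / dist (\<phi> x) (\<phi> y) \<le> K_const \<phi>" using upper[OF False] a c
      unfolding q_def case_prod_conv using divide_nonneg_nonneg[OF zero_le_dist zero_le_dist, of "\<phi> x" "\<phi> y" x y] by linarith
    thus ?thesis using a by (simp add: divide_le_eq mult.commute)
  qed simp
qed



lemma completion_dec:
  assumes "A \<in> sets (completion M)"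
  obtains S N' where "S \<in> sets M" "N' \<in> null_sets M" "S \<subseteq> A" "A \<subseteq> S \<union> N'"
proof -
  from sets_completionE[OF assms] obtain S N N' where h: "A = S \<union> N" "N \<subseteq> N'" "N' \<in> null_sets M" "S \<in> sets M"
    by metis
  have "S \<subseteq> A" "A \<subseteq> S \<union> N'" using h(1,2) by auto
  thus ?thesis using h(3,4) that by blast
qed

lemma completion_preserving:
  fixes f :: "'b::euclidean_space \<Rightarrow> 'b"
  assumes f: "f \<in> borel \<rightarrow>\<^sub>M borel"
  and pres: "\<And>B. B \<in> sets borel \<Longrightarrow> emeasure lborel (f -` B) = emeasure lborel B"
  shows "f \<in> lebesgue \<rightarrow>\<^sub>M lebesgue" "distr lebesgue lebesgue f = lebesgue"
proof -
  have fm: "f -` B \<in> sets lborel" if "B \<in> sets borel" for B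
    using measurable_sets[OF f that] by simp
  have null: "f -` N' \<in> null_sets lborel" if "N' \<in> null_sets lborel" for N'
  proof -
    have B: "N' \<in> sets borel" using that by (simp add: null_sets_def)
    have "emeasure lborel (f -` N') = 0" using pres[OF B] that by (simp add: null_sets_def)
    thus ?thesis using fm[OF B] by (simp add: null_sets_def)
  qed
  show meas: "f \<in> lebesgue \<rightarrow>\<^sub>M lebesgue"
  proof (rule measurableI)
    fix A :: "'b set" assume A: "A \<in> sets lebesgue"
    obtain S N' where S: "S \<in> sets lborel" "N' \<in> null_sets lborel" "S \<subseteq> A" "A \<subseteq> S \<union> N'"
      using completion_dec[OF A] .
    have e: "f -` A \<inter> space lebesgue = f -` S \<union> (f -` A - f -` S)" using S(3) by auto
    have sub: "f -` A - f -` S \<subseteq> f -` N'" using S(4) by auto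
    have fS: "f -` S \<in> sets lborel" using fm S(1) by simp
    show "f -` A \<inter> space lebesgue \<in> sets lebesgue"
      by (rule sets_completionI[OF e sub null[OF S(2)] fS])
  qed simp
  show "distr lebesgue lebesgue f = lebesgue"
  proof (rule measure_eqI)
    fix A :: "'b set" assume "A \<in> sets (distr lebesgue lebesgue f)"
    hence A: "A \<in> sets lebesgue" by simp
    obtain S N' where S: "S \<in> sets lborel" "N' \<in> null_sets lborel" "S \<subseteq> A" "A \<subseteq> S \<union> N'"
      using completion_dec[OF A] .
    have fS: "f -` S \<in> sets lborel" using fm S(1) by simp
    have N1: "f -` A - f -` S \<in> null_sets lebesgue"
    proof (rule null_sets_completion_subset[of _ "f -` N'"])
      show "f -` A - f -` S \<subseteq> f -` N'" using S(4) by auto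
      show "f -` N' \<in> null_sets lebesgue" using null[OF S(2)] by (rule null_sets_completionI)
    qed
    have N2: "A - S \<in> null_sets lebesgue"
    proof (rule null_sets_completion_subset[of _ "N'"])
      show "A - S \<subseteq> N'" using S(4) by auto
      show "N' \<in> null_sets lebesgue" using S(2) by (rule null_sets_completionI)
    qed
    have "emeasure (distr lebesgue lebesgue f) A = emeasure lebesgue (f -` A)"
      using A meas by (simp add: emeasure_distr)
    also have "f -` A = f -` S \<union> (f -` A - f -` S)" using S(3) by auto
    also have "emeasure lebesgue \<dots> = emeasure lebesgue (f -` S)"
      by (rule emeasure_Un_null_set) (use fS N1 in auto)
    also have "\<dots> = emeasure lborel (f -` S)" using fS by simp
    also have "\<dots> = emeasure lborel S" using pres S(1) by simp
    also have "\<dots> = emeasure lebesgue S" using S(1) by simp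
    also have "\<dots> = emeasure lebesgue (S \<union> (A - S))"
      by (rule emeasure_Un_null_set[symmetric]) (use S(1) N2 in auto)
    also have "S \<union> (A - S) = A" using S(3) by auto
    finally show "emeasure (distr lebesgue lebesgue f) A = emeasure lebesgue A" .
  qed simp
qed



lemma phi_props:
  fixes \<phi> :: "'a::euclidean_space \<Rightarrow> 'a"
  assumes bl: "bi_lipschitz_homeo \<phi>" and pl: "preserves_lebesgue \<phi>"
  shows "continuous_on UNIV \<phi>" "continuous_on UNIV (inv \<phi>)" "bij \<phi>"
    "\<And>B. B \<in> sets borel \<Longrightarrow> emeasure lborel (\<phi> -` B) = emeasure lborel B"
    "distr lborel lborel \<phi> = lborel"
proof -
  obtain L1 L2 where bij: "bij \<phi>" and L1: "L1-lipschitz_on UNIV \<phi>" and L2: "L2-lipschitz_on UNIV (inv \<phi>)"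
    using bl unfolding bi_lipschitz_homeo_def by blast
  show c1: "continuous_on UNIV \<phi>" using L1 by (rule lipschitz_on_continuous_on)
  show "continuous_on UNIV (inv \<phi>)" using L2 by (rule lipschitz_on_continuous_on)
  show "bij \<phi>" by fact
  have meas: "\<phi> \<in> borel \<rightarrow>\<^sub>M borel" using c1 by (rule borel_measurable_continuous_onI)
  show pres: "emeasure lborel (\<phi> -` B) = emeasure lborel B" if B: "B \<in> sets borel" for B
  proof -
    have P: "\<phi> -` B \<in> sets borel" using measurable_sets[OF meas B] by simp
    have P': "\<phi> -` B \<in> sets lebesgue" using P by simp
    have e1: "emeasure lebesgue (\<phi> ` (\<phi> -` B)) = emeasure lebesgue (\<phi> -` B)"
      using pl P' unfolding preserves_lebesgue_def by blast
    have e2: "\<phi> ` (\<phi> -` B) = B" using bij by (simp add: bij_is_surj surj_image_vimage_eq)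
    have "emeasure lborel (\<phi> -` B) = emeasure lebesgue (\<phi> -` B)" using P by simp
    also have "\<dots> = emeasure lebesgue B" using e1 e2 by simp
    also have "emeasure lebesgue B = emeasure lborel B" using B by simp
    finally show ?thesis .
  qed
  show "distr lborel lborel \<phi> = lborel"
  proof (rule measure_eqI)
    fix B assume "B \<in> sets (distr lborel lborel \<phi>)"
    hence B: "B \<in> sets borel" by simp
    have "\<phi> \<in> lborel \<rightarrow>\<^sub>M lborel" using meas by simp
    thus "emeasure (distr lborel lborel \<phi>) B = emeasure lborel B" using B pres
      by (simp add: emeasure_distr)
  qed simp
qed

lemma Phi_props:
  fixes \<phi> :: "'a::euclidean_space \<Rightarrow> 'a"
  assumes bl: "bi_lipschitz_homeo \<phi>" and pl: "preserves_lebesgue \<phi>"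
  defines "\<Phi> \<equiv> (\<lambda>(t::real,x). (t, \<phi> x))"
  shows "\<Phi> \<in> lebesgue \<rightarrow>\<^sub>M lebesgue" "distr lebesgue lebesgue \<Phi> = lebesgue"
proof -
  note P = phi_props[OF bl pl]
  have eqP: "\<Phi> = (\<lambda>p. (fst p, \<phi> (snd p)))" unfolding \<Phi>_def by (auto simp: fun_eq_iff)
  have c2: "continuous_on UNIV (\<lambda>p::real\<times>'a. \<phi> (snd p))"
    by (rule continuous_on_compose2[OF P(1) continuous_on_snd]) auto
  have c: "continuous_on UNIV \<Phi>" unfolding eqP
    by (intro continuous_on_Pair continuous_on_fst c2 continuous_on_id)
  have meas: "\<Phi> \<in> borel \<rightarrow>\<^sub>M borel" using c by (rule borel_measurable_continuous_onI)
  have mphi: "\<phi> \<in> lborel \<rightarrow>\<^sub>M lborel" using borel_measurable_continuous_onI[OF P(1)] by simp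
  have "distr (lborel \<Otimes>\<^sub>M lborel) (lborel \<Otimes>\<^sub>M lborel) (\<lambda>(x, y). (id x, \<phi> y))
      = distr lborel lborel (id::real\<Rightarrow>real) \<Otimes>\<^sub>M distr lborel lborel \<phi>"
    by (rule pair_measure_distr[symmetric]) (use mphi P(5) in \<open>auto intro: lborel.sigma_finite_measure_axioms\<close>)
  also have "\<dots> = lborel \<Otimes>\<^sub>M lborel" using P(5) distr_id[of lborel] by (simp add: id_def)
  finally have D: "distr lborel lborel \<Phi> = lborel"
    unfolding \<Phi>_def lborel_prod by (simp add: id_def)
  have "\<Phi> \<in> lborel \<rightarrow>\<^sub>M lborel" using meas by simp
  hence pres: "emeasure lborel (\<Phi> -` B) = emeasure lborel B" if "B \<in> sets borel" for B
    using that arg_cong[OF D, of "\<lambda>M. emeasure M B"] by (simp add: emeasure_distr)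
  show "\<Phi> \<in> lebesgue \<rightarrow>\<^sub>M lebesgue" "distr lebesgue lebesgue \<Phi> = lebesgue"
    using completion_preserving[OF meas pres] by auto
qed



lemma emeasure_density_le:
  "emeasure (density M f) A \<le> (\<integral>\<^sup>+ x. f x * indicator A x \<partial>M)"
  unfolding density_def emeasure_measure_of_conv by auto

lemma ln_integral_le:
  assumes "0 < s" "s \<le> r" "0 \<le> (M::real)"
  shows "(\<integral>\<^sup>+t. ennreal (M\<^sup>2 / t) * indicator {s<..r} t \<partial>lborel) \<le> ennreal (M\<^sup>2 * (ln r - ln s))"
proof -
  have "(\<integral>\<^sup>+t. ennreal (M\<^sup>2 / t) * indicator {s<..r} t \<partial>lborel)
      \<le> (\<integral>\<^sup>+t. ennreal (M\<^sup>2 / t) * indicator {s..r} t \<partial>lborel)"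
    by (intro nn_integral_mono mult_left_mono) (auto simp: indicator_def)
  also have "\<dots> = ennreal (M\<^sup>2 * ln r - M\<^sup>2 * ln s)"
  proof (rule nn_integral_FTC_Icc)
    show "(\<lambda>t. M\<^sup>2 / t) \<in> borel_measurable borel" by measurable
    fix x assume x: "x \<in> {s..r}"
    hence "x > 0" using assms by auto
    thus "((\<lambda>t. M\<^sup>2 * ln t) has_real_derivative M\<^sup>2 / x) (at x)"
      by (auto intro!: derivative_eq_intros simp: field_simps)
    show "0 \<le> M\<^sup>2 / x" using \<open>x > 0\<close> by simp
  qed (use assms in auto)
  also have "\<dots> = ennreal (M\<^sup>2 * (ln r - ln s))" by (simp add: right_diff_distrib)
  finally show ?thesis .
qed

lemma prod_integral:
  fixes U :: "'a::euclidean_space set" and I :: "real set"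
  assumes [measurable]: "I \<in> sets borel" "U \<in> sets borel" "g \<in> borel_measurable borel"
  shows "(\<integral>\<^sup>+q. g (fst q) * indicator (I \<times> U) q \<partial>lebesgue)
       = (\<integral>\<^sup>+t. g t * indicator I t \<partial>lborel) * emeasure lborel U"
proof -
  have m: "(\<lambda>q::real\<times>'a. g (fst q) * indicator (I \<times> U) q) \<in> borel_measurable (lborel \<Otimes>\<^sub>M lborel)"
    by measurable
  have "(\<integral>\<^sup>+q. g (fst q) * indicator (I \<times> U) q \<partial>lebesgue)
      = (\<integral>\<^sup>+q. g (fst q) * indicator (I \<times> U) q \<partial>(lborel \<Otimes>\<^sub>M lborel))"
    by (simp add: nn_integral_completion lborel_prod)
  also have "\<dots> = (\<integral>\<^sup>+t. \<integral>\<^sup>+y. g t * indicator I t * indicator U y \<partial>lborel \<partial>lborel)"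
    by (subst lborel.nn_integral_fst[OF m, symmetric]) (simp add: indicator_times mult.assoc)
  also have "\<dots> = (\<integral>\<^sup>+t. g t * indicator I t * emeasure lborel U \<partial>lborel)"
    by (simp add: nn_integral_cmult_indicator)
  also have "\<dots> = (\<integral>\<^sup>+t. g t * indicator I t \<partial>lborel) * emeasure lborel U"
    by (rule nn_integral_multc) measurable
  finally show ?thesis .
qed



lemma count_subadd:
  assumes "countable I" "\<And>i. i \<in> I \<Longrightarrow> X i \<in> sets M"
  shows "emeasure M (\<Union>(X ` I)) \<le> (\<integral>\<^sup>+i. emeasure M (X i) \<partial>count_space I)"
proof -
  have U: "\<Union>(X ` I) \<in> sets M" using assms by (intro sets.countable_UN'') auto
  have "emeasure M (\<Union>(X ` I)) = (\<integral>\<^sup>+x. indicator (\<Union>(X ` I)) x \<partial>M)"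
    using U by simp
  also have "\<dots> \<le> (\<integral>\<^sup>+x. \<integral>\<^sup>+i. indicator (X i) x \<partial>count_space I \<partial>M)"
  proof (intro nn_integral_mono)
    fix x
    show "indicator (\<Union>(X ` I)) x \<le> (\<integral>\<^sup>+i. indicator (X i) x \<partial>count_space I)"
    proof (cases "x \<in> \<Union>(X ` I)")
      case True
      then obtain j where j: "j \<in> I" "x \<in> X j" by auto
      have "(1::ennreal) = (\<integral>\<^sup>+i. indicator {j} i \<partial>count_space I)"
        using j by (simp add: nn_integral_indicator')
      also have "\<dots> \<le> (\<integral>\<^sup>+i. indicator (X i) x \<partial>count_space I)"
        using j by (intro nn_integral_mono) (auto simp: indicator_def)
      finally show ?thesis using True by simp
    qed simp
  qed
  also have "\<dots> = (\<integral>\<^sup>+i. \<integral>\<^sup>+x. indicator (X i) x \<partial>M \<partial>count_space I)"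
    by (rule nn_integral_count_space_nn_integral) (use assms in auto)
  also have "\<dots> = (\<integral>\<^sup>+i. emeasure M (X i) \<partial>count_space I)"
    by (intro nn_integral_cong) (use assms in auto)
  finally show ?thesis .
qed

lemma cover:
  fixes \<phi> :: "'a::euclidean_space \<Rightarrow> 'a"
  assumes bij: "bij \<phi>" and inv: "\<And>x y. dist x y \<le> K * dist (\<phi> x) (\<phi> y)" and K: "K > 0" and r: "r > 0"
  obtains C where "countable C" "C \<subseteq> \<phi> ` ball c r"
    "disjoint_family_on (\<lambda>y. ball y (r/K/5)) C"
    "\<phi> ` ball c r \<subseteq> (\<Union>y\<in>C. ball y (r/K))"
    "(\<Union>y\<in>C. ball y (r/K/5)) \<subseteq> \<phi> ` ball c (2*r)"
proof -
  define s where "s = r / K"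
  have s: "s > 0" using K r by (simp add: s_def)
  have S: "\<phi> ` ball c r \<subseteq> (\<Union>i\<in>\<phi> ` ball c r. ball (id i) ((\<lambda>_. s/5) i))" using s by auto
  obtain C where C: "countable C" "C \<subseteq> \<phi> ` ball c r"
     "pairwise (\<lambda>i j. disjnt (ball (id i) ((\<lambda>_. s/5) i)) (ball (id j) ((\<lambda>_. s/5) j))) C"
     "\<phi> ` ball c r \<subseteq> (\<Union>i\<in>C. ball (id i) (5 * (\<lambda>_. s/5) i))"
    by (rule Vitali_covering_lemma_balls[OF S, where B="s/5"]) (use s in auto)
  show ?thesis
  proof
    show "countable C" "C \<subseteq> \<phi> ` ball c r" using C by auto
    show "disjoint_family_on (\<lambda>y. ball y (r/K/5)) C"
      using C(3) unfolding disjoint_family_on_def pairwise_def disjnt_def s_def by auto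
    show "\<phi> ` ball c r \<subseteq> (\<Union>y\<in>C. ball y (r/K))" using C(4) unfolding s_def by simp
    show "(\<Union>y\<in>C. ball y (r/K/5)) \<subseteq> \<phi> ` ball c (2*r)"
    proof
      fix w assume "w \<in> (\<Union>y\<in>C. ball y (r/K/5))"
      then obtain x where x: "x \<in> ball c r" "dist (\<phi> x) w < r/K/5" using C(2) by auto
      define z where "z = inv \<phi> w"
      have wz: "\<phi> z = w" unfolding z_def using bij by (simp add: bij_is_surj surj_f_inv_f)
      have "dist x z \<le> K * dist (\<phi> x) (\<phi> z)" by (rule inv)
      also have "\<dots> < K * (r/K/5)" using x wz K by (intro mult_strict_left_mono) auto
      also have "\<dots> = r/5" using K by simp
      finally have "dist x z < r/5" .
      hence "dist c z < 2*r" using x(1) dist_triangle[of c z x] r by (simp add: dist_commute)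
      thus "w \<in> \<phi> ` ball c (2*r)" using wz by auto
    qed
  qed
qed



lemma ennreal_div_le_iff:
  fixes x y :: ennreal
  assumes "q > 0"
  shows "x / ennreal q \<le> y \<longleftrightarrow> x \<le> y * ennreal q"
proof
  assume h: "x / ennreal q \<le> y"
  have "x = x / ennreal q * ennreal q"
    using assms by (simp add: ennreal_divide_times)
  also have "\<dots> \<le> y * ennreal q" using h by (rule mult_right_mono) simp
  finally show "x \<le> y * ennreal q" .
next
  assume "x \<le> y * ennreal q"
  thus "x / ennreal q \<le> y" using assms by (simp add: divide_le_posI_ennreal mult.commute)
qed

lemma ball_vol:
  "r \<ge> 0 \<Longrightarrow> emeasure lborel (ball (c::'a::euclidean_space) r) = ennreal (unit_ball_vol (DIM('a)) * r ^ DIM('a))"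
  by (rule emeasure_ball)

lemma tent_borel: "tent c r \<in> sets borel"
proof -
  have "tent c r = {0<..r} \<times> ball c r" unfolding tent_def by auto
  thus ?thesis by (simp add: borel_Times)
qed

lemma H_borel: "({0<..} \<times> UNIV :: (real \<times> 'a::euclidean_space) set) \<in> sets borel"
  by (simp add: borel_Times)

lemma tent_sets: "tent c r \<in> sets (halfspace :: (real \<times> 'a::euclidean_space) measure)"
  unfolding halfspace_def using tent_borel[of c r] H_borel
  by (subst sets_restrict_space_iff) (auto simp: tent_def)

lemma tent_le:
  fixes c :: "'a::euclidean_space" and \<mu> :: "(real \<times> 'a) measure"
  assumes "r > 0"
  shows "emeasure \<mu> (tent c r) \<le> carleson_norm \<mu> * ennreal (unit_ball_vol (DIM('a)) * r ^ DIM('a))"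
    (is "_ \<le> _ * ennreal ?v")
proof -
  have v: "?v > 0" using assms by simp
  have "emeasure \<mu> (tent c r) / emeasure lebesgue (ball c r) \<le> carleson_norm \<mu>"
    unfolding carleson_norm_def using assms
    by (intro SUP_upper2[of "(c,r)"]) auto
  also have "emeasure lebesgue (ball c r) = ennreal ?v"
    using ball_vol[of r c] assms by simp
  finally show ?thesis using ennreal_div_le_iff[OF v] by blast
qed



lemma main_local:
  fixes \<phi> :: "'a::euclidean_space \<Rightarrow> 'a" and \<beta> :: "real \<times> 'a \<Rightarrow> real"
  assumes bl: "bi_lipschitz_homeo \<phi>" and pl: "preserves_lebesgue \<phi>"
    and bm: "\<beta> \<in> borel_measurable halfspace"
    and M: "M \<ge> 0" "AE p in halfspace. \<bar>\<beta> p\<bar> \<le> M"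
    and n: "carleson_norm (mu_beta \<beta>) = ennreal n" "n \<ge> 0"
    and r: "r > 0"
  shows "emeasure (mu_beta (\<lambda>(t,x). \<beta> (t, \<phi> x))) (tent c r)
     \<le> ennreal (M\<^sup>2 * ln (K_const \<phi>) + 10 ^ DIM('a) * n) * emeasure lborel (ball c r)"
proof -
  define K where "K = K_const \<phi>"
  have K2: "K \<ge> 2" and Kf: "\<And>x y. dist (\<phi> x) (\<phi> y) \<le> K * dist x y"
    and Ki: "\<And>x y. dist x y \<le> K * dist (\<phi> x) (\<phi> y)"
    using K_facts[OF bl] unfolding K_def by auto
  note P = phi_props[OF bl pl]
  define \<Phi> :: "real \<times> 'a \<Rightarrow> real \<times> 'a" where "\<Phi> = (\<lambda>(t,x). (t, \<phi> x))"
  have \<Phi>m: "\<Phi> \<in> lebesgue \<rightarrow>\<^sub>M lebesgue" and \<Phi>d: "distr lebesgue lebesgue \<Phi> = lebesgue"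
    using Phi_props[OF bl pl] unfolding \<Phi>_def by auto
  define H :: "(real \<times> 'a) set" where "H = {0<..} \<times> UNIV"
  have Hb: "H \<in> sets borel" unfolding H_def by (rule H_borel)
  have Hl: "H \<in> sets lebesgue" using Hb by simp
  have hs: "halfspace = restrict_space lebesgue H" unfolding halfspace_def H_def ..
  define gb :: "real \<times> 'a \<Rightarrow> ennreal" where "gb = (\<lambda>(t,x). ennreal ((\<beta> (t,x))\<^sup>2 / t))"
  define G where "G = (\<lambda>q. gb q * indicator H q)"
  have fstb: "(fst :: real \<times> 'a \<Rightarrow> real) \<in> borel_measurable lborel"
    using borel_measurable_continuous_onI[OF continuous_on_fst[OF continuous_on_id]] by simp
  have fstm[measurable]: "(fst :: real \<times> 'a \<Rightarrow> real) \<in> borel_measurable halfspace"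
    unfolding hs by (rule measurable_restrict_space1) (rule measurable_completion[OF fstb])
  note bm[measurable]
  have gbe: "gb = (\<lambda>p. ennreal ((\<beta> p)\<^sup>2 / fst p))" unfolding gb_def by (auto simp: fun_eq_iff)
  have gbm: "gb \<in> borel_measurable halfspace"
    unfolding gbe by measurable
  have Gm: "G \<in> borel_measurable lebesgue"
    using gbm unfolding G_def hs using Hl
    by (subst (asm) borel_measurable_restrict_space_iff_ennreal) auto
  define s where "s = r / K"
  have s: "s > 0" "s \<le> r" using r K2 by (auto simp: s_def field_simps)
  have inj: "inj \<phi>" using P(3) bij_is_inj by blast
  have imgeq: "\<phi> ` A = inv \<phi> -` A" for A
    using P(3) by (auto simp: bij_def inv_f_f surj_f_inv_f image_iff) (metis surj_f_inv_f)
  have openimg: "open (\<phi> ` A)" if "open A" for A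
    unfolding imgeq using P(2) that by (simp add: continuous_on_open_vimage)
  have measimg: "emeasure lborel (\<phi> ` A) = emeasure lborel A" if "open A" for A
  proof -
    have "emeasure lborel (\<phi> ` A) = emeasure lebesgue (\<phi> ` A)" using openimg[OF that] by simp
    also have "\<dots> = emeasure lebesgue A"
    proof -
      have "A \<in> sets lebesgue" using that by simp
      thus ?thesis using pl unfolding preserves_lebesgue_def by blast
    qed
    also have "\<dots> = emeasure lborel A" using that by simp
    finally show ?thesis .
  qed
  define U where "U = \<phi> ` ball c r"
  have Uo: "open U" unfolding U_def by (rule openimg) simp
  have Ub: "U \<in> sets borel" using Uo by simp
  have Um: "emeasure lborel U = emeasure lborel (ball c r)" unfolding U_def by (rule measimg) simp
  define T1 where "T1 = {s<..r} \<times> U"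
  define T2 where "T2 = {0<..s} \<times> U"
  have T1b: "T1 \<in> sets borel" and T2b: "T2 \<in> sets borel" unfolding T1_def T2_def using Ub by (auto simp: borel_Times)
  have T1l[measurable]: "T1 \<in> sets lebesgue" and T2l[measurable]: "T2 \<in> sets lebesgue" using T1b T2b by simp_all
  note Gm[measurable]
  have Fm: "(\<lambda>q. G q * indicator T1 q + G q * indicator T2 q) \<in> borel_measurable lebesgue" by measurable
  define \<nu> where "\<nu> = mu_beta (\<lambda>(t,x). \<beta> (t, \<phi> x))"
  define \<mu> where "\<mu> = mu_beta \<beta>"
  have step1: "emeasure \<nu> (tent c r) \<le> (\<integral>\<^sup>+q. G q * indicator T1 q \<partial>lebesgue) + (\<integral>\<^sup>+q. G q * indicator T2 q \<partial>lebesgue)"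
  proof -
    have "emeasure \<nu> (tent c r) \<le> (\<integral>\<^sup>+p. (\<lambda>(t,x). ennreal (((\<lambda>(t,x). \<beta> (t, \<phi> x)) (t,x))\<^sup>2 / t)) p * indicator (tent c r) p \<partial>halfspace)"
      unfolding \<nu>_def mu_beta_def by (rule emeasure_density_le)
    also have "\<dots> = (\<integral>\<^sup>+p. gb (\<Phi> p) * indicator (tent c r) p \<partial>halfspace)"
      by (intro nn_integral_cong) (auto simp: gb_def \<Phi>_def split: prod.splits)
    also have "\<dots> = (\<integral>\<^sup>+p. gb (\<Phi> p) * indicator (tent c r) p * indicator H p \<partial>lebesgue)"
      unfolding hs using Hl by (subst nn_integral_restrict_space) auto
    also have "\<dots> = (\<integral>\<^sup>+p. (\<lambda>q. G q * indicator T1 q + G q * indicator T2 q) (\<Phi> p) \<partial>lebesgue)"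
    proof (intro nn_integral_cong)
      fix p :: "real \<times> 'a"
      obtain t x where p: "p = (t,x)" by (cases p)
      have e: "\<phi> x \<in> U \<longleftrightarrow> x \<in> ball c r" unfolding U_def using inj by (simp add: inj_image_mem_iff)
      show "gb (\<Phi> p) * indicator (tent c r) p * indicator H p = (\<lambda>q. G q * indicator T1 q + G q * indicator T2 q) (\<Phi> p)"
        unfolding p using s e by (auto simp: indicator_def tent_def T1_def T2_def H_def G_def \<Phi>_def)
    qed
    also have "\<dots> = (\<integral>\<^sup>+q. G q * indicator T1 q + G q * indicator T2 q \<partial>distr lebesgue lebesgue \<Phi>)"
      by (rule nn_integral_distr[OF \<Phi>m, symmetric]) (use Fm \<Phi>d in simp)
    also have "\<dots> = (\<integral>\<^sup>+q. G q * indicator T1 q + G q * indicator T2 q \<partial>lebesgue)"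
      unfolding \<Phi>d ..
    also have "\<dots> = (\<integral>\<^sup>+q. G q * indicator T1 q \<partial>lebesgue) + (\<integral>\<^sup>+q. G q * indicator T2 q \<partial>lebesgue)"
      by (rule nn_integral_add) (use Gm T1b T2b in auto)
    finally show ?thesis .
  qed
  have step2: "(\<integral>\<^sup>+q. G q * indicator T2 q \<partial>lebesgue) = emeasure \<mu> T2"
  proof -
    have T2s: "T2 \<in> sets halfspace" unfolding hs using T2b Hl s
      by (subst sets_restrict_space_iff) (auto simp: T2_def H_def)
    have "emeasure \<mu> T2 = (\<integral>\<^sup>+q. gb q * indicator T2 q \<partial>halfspace)"
      unfolding \<mu>_def mu_beta_def gb_def[symmetric] by (rule emeasure_density[OF gbm T2s])
    also have "\<dots> = (\<integral>\<^sup>+q. gb q * indicator T2 q * indicator H q \<partial>lebesgue)"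
      unfolding hs using Hl by (subst nn_integral_restrict_space) auto
    also have "\<dots> = (\<integral>\<^sup>+q. G q * indicator T2 q \<partial>lebesgue)"
      by (intro nn_integral_cong) (simp add: G_def mult_ac)
    finally show ?thesis by simp
  qed
  have step3: "emeasure \<mu> T2 \<le> ennreal (10 ^ DIM('a) * n) * emeasure lborel (ball c r)"
  proof -
    define V where "V = unit_ball_vol (DIM('a))"
    define d where "d = DIM('a)"
    have V: "V > 0" unfolding V_def by simp
    obtain C where C: "countable C" "C \<subseteq> \<phi> ` ball c r"
      "disjoint_family_on (\<lambda>y. ball y (r/K/5)) C"
      "\<phi> ` ball c r \<subseteq> (\<Union>y\<in>C. ball y (r/K))"
      "(\<Union>y\<in>C. ball y (r/K/5)) \<subseteq> \<phi> ` ball c (2*r)"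
      by (rule cover[OF P(3) Ki _ r]) (use K2 in auto)
    have tsets: "tent y s \<in> sets \<mu>" for y unfolding \<mu>_def mu_beta_def by (simp add: tent_sets)
    have "T2 \<subseteq> (\<Union>y\<in>C. tent y s)"
    proof
      fix q assume "q \<in> T2"
      then obtain t z where q: "q = (t,z)" "0 < t" "t \<le> s" "z \<in> U" unfolding T2_def by auto
      then obtain y where "y \<in> C" "z \<in> ball y s" using C(4) unfolding U_def s_def by auto
      thus "q \<in> (\<Union>y\<in>C. tent y s)" using q unfolding tent_def by auto
    qed
    hence "emeasure \<mu> T2 \<le> emeasure \<mu> (\<Union>y\<in>C. tent y s)"
      by (intro emeasure_mono) (use C(1) tsets in \<open>auto intro: sets.countable_UN''\<close>)
    also have "\<dots> \<le> (\<integral>\<^sup>+y. emeasure \<mu> (tent y s) \<partial>count_space C)"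
      by (rule count_subadd) (use C(1) tsets in auto)
    also have "\<dots> \<le> (\<integral>\<^sup>+y. ennreal n * ennreal (V * s ^ d) \<partial>count_space C)"
    proof (intro nn_integral_mono)
      fix y
      have "emeasure \<mu> (tent y s) \<le> carleson_norm \<mu> * ennreal (unit_ball_vol (DIM('a)) * s ^ DIM('a))"
        by (rule tent_le[OF s(1)])
      thus "emeasure \<mu> (tent y s) \<le> ennreal n * ennreal (V * s ^ d)"
        using n(1) by (simp add: \<mu>_def V_def d_def)
    qed
    also have "\<dots> = (\<integral>\<^sup>+y. ennreal (n * 5 ^ d) * emeasure lborel (ball y (s/5)) \<partial>count_space C)"
    proof (intro nn_integral_cong)
      fix y :: 'a
      have "emeasure lborel (ball y (s/5)) = ennreal (V * (s/5) ^ d)"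
        using ball_vol[of "s/5" y] s by (simp add: V_def d_def)
      moreover have "n * V * s ^ d = n * 5 ^ d * (V * (s/5) ^ d)"
        by (simp add: power_divide field_simps)
      ultimately show "ennreal n * ennreal (V * s ^ d) = ennreal (n * 5 ^ d) * emeasure lborel (ball y (s/5))"
        using n(2) V s by (simp add: ennreal_mult[symmetric] mult.assoc)
    qed
    also have "\<dots> = ennreal (n * 5 ^ d) * (\<integral>\<^sup>+y. emeasure lborel (ball y (s/5)) \<partial>count_space C)"
      by (rule nn_integral_cmult) simp
    also have "(\<integral>\<^sup>+y. emeasure lborel (ball y (s/5)) \<partial>count_space C) = emeasure lborel (\<Union>y\<in>C. ball y (s/5))"
      by (rule emeasure_UN_countable[symmetric]) (use C(1,3) in \<open>auto simp: s_def\<close>)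
    also have "emeasure lborel (\<Union>y\<in>C. ball y (s/5)) \<le> emeasure lborel (\<phi> ` ball c (2*r))"
      by (rule emeasure_mono) (use C(5) openimg[of "ball c (2*r)"] in \<open>auto simp: s_def\<close>)
    also have "\<dots> = emeasure lborel (ball c (2*r))" by (rule measimg) simp
    also have "\<dots> = ennreal (V * (2*r) ^ d)" using ball_vol[of "2*r" c] r by (simp add: V_def d_def)
    also have "ennreal (n * 5 ^ d) * ennreal (V * (2*r) ^ d) = ennreal (10 ^ d * n) * ennreal (V * r ^ d)"
    proof -
      have "n * 5 ^ d * (V * (2*r) ^ d) = 10 ^ d * n * (V * r ^ d)"
      proof -
        have a: "(10::real) ^ d = 5 ^ d * 2 ^ d" by (simp flip: power_mult_distrib)
        have b: "(2 * r) ^ d = 2 ^ d * r ^ d" by (rule power_mult_distrib)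
        show ?thesis unfolding a b by (simp only: mult_ac)
      qed
      thus ?thesis using n(2) V r by (simp add: ennreal_mult[symmetric])
    qed
    also have "ennreal (V * r ^ d) = emeasure lborel (ball c r)" using ball_vol[of r c] r by (simp add: V_def d_def)
    finally show ?thesis by (simp add: d_def mult_left_mono)
  qed
  have step4: "(\<integral>\<^sup>+q. G q * indicator T1 q \<partial>lebesgue) \<le> ennreal (M\<^sup>2 * ln K) * emeasure lborel (ball c r)"
  proof -
    have AEH: "AE q in lebesgue. q \<in> H \<longrightarrow> \<bar>\<beta> q\<bar> \<le> M"
      using M(2) unfolding hs using Hl by (subst (asm) AE_restrict_space_iff) auto
    have "(\<integral>\<^sup>+q. G q * indicator T1 q \<partial>lebesgue) \<le> (\<integral>\<^sup>+q. ennreal (M\<^sup>2 / fst q) * indicator T1 q \<partial>lebesgue)"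
    proof (rule nn_integral_mono_AE)
      show "AE q in lebesgue. G q * indicator T1 q \<le> ennreal (M\<^sup>2 / fst q) * indicator T1 q"
        using AEH
      proof (rule eventually_mono)
        fix q :: "real \<times> 'a" assume h: "q \<in> H \<longrightarrow> \<bar>\<beta> q\<bar> \<le> M"
        show "G q * indicator T1 q \<le> ennreal (M\<^sup>2 / fst q) * indicator T1 q"
        proof (cases "q \<in> T1")
          case True
          obtain t y where q: "q = (t,y)" by (cases q)
          have t: "t > 0" using True s unfolding q T1_def by auto
          have qH: "q \<in> H" using t unfolding q H_def by auto
          have "\<bar>\<beta> q\<bar> \<le> M" using h qH by simp
          hence "(\<beta> q)\<^sup>2 \<le> M\<^sup>2" by (metis abs_ge_zero power2_abs power_mono)
          hence "(\<beta> q)\<^sup>2 / t \<le> M\<^sup>2 / t" using t by (simp add: divide_right_mono)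
          thus ?thesis using True qH unfolding G_def gb_def q by (simp add: ennreal_leI)
        qed simp
      qed
    qed
    also have "\<dots> = (\<integral>\<^sup>+t. ennreal (M\<^sup>2 / t) * indicator {s<..r} t \<partial>lborel) * emeasure lborel U"
      unfolding T1_def by (rule prod_integral[where g="\<lambda>t. ennreal (M\<^sup>2 / t)"]) (use Ub in auto)
    also have "\<dots> \<le> ennreal (M\<^sup>2 * (ln r - ln s)) * emeasure lborel U"
      by (rule mult_right_mono[OF ln_integral_le]) (use s M in auto)
    also have "ln r - ln s = ln K" using r K2 unfolding s_def by (simp add: ln_div)
    finally show ?thesis using Um by simp
  qed
  have "emeasure \<nu> (tent c r) \<le> ennreal (M\<^sup>2 * ln K) * emeasure lborel (ball c r) + ennreal (10 ^ DIM('a) * n) * emeasure lborel (ball c r)"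
  proof -
    have "emeasure \<nu> (tent c r) \<le> (\<integral>\<^sup>+q. G q * indicator T1 q \<partial>lebesgue) + emeasure \<mu> T2"
      using step1 step2 by simp
    also have "\<dots> \<le> ennreal (M\<^sup>2 * ln K) * emeasure lborel (ball c r) + ennreal (10 ^ DIM('a) * n) * emeasure lborel (ball c r)"
      by (rule add_mono[OF step4 step3])
    finally show ?thesis .
  qed
  also have "\<dots> = ennreal (M\<^sup>2 * ln K + 10 ^ DIM('a) * n) * emeasure lborel (ball c r)"
  proof -
    have h1: "0 \<le> M\<^sup>2 * ln K" using K2 by simp
    have h2: "0 \<le> 10 ^ DIM('a) * n" using n(2) by simp
    show ?thesis unfolding ennreal_plus[OF h1 h2] by (simp add: distrib_right)
  qed
  finally show ?thesis unfolding \<nu>_def K_def .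
qed



theorem corollary2p8:
  fixes A :: real
  assumes "A > 0"
  shows "\<exists>C::real. \<forall>(\<phi>::'a::euclidean_space \<Rightarrow> 'a) (\<beta>::real \<times> 'a \<Rightarrow> real).
           bi_lipschitz_homeo \<phi> \<longrightarrow> preserves_lebesgue \<phi> \<longrightarrow>
           \<beta> \<in> borel_measurable halfspace \<longrightarrow> Linf_norm \<beta> < \<infinity> \<longrightarrow>
           carleson_norm (mu_beta \<beta>) < \<infinity> \<longrightarrow>
           (Linf_norm \<beta>)\<^sup>2 \<le> ereal A * enn2ereal (carleson_norm (mu_beta \<beta>)) \<longrightarrow>
           carleson_norm (mu_beta (\<lambda>(t,x). \<beta> (t, \<phi> x)))
             \<le> ennreal (C * ln (K_const \<phi>)) * carleson_norm (mu_beta \<beta>)"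
proof (intro exI[of _ "A + 10 ^ DIM('a) / ln 2"] allI impI)
  fix \<phi> :: "'a \<Rightarrow> 'a" and \<beta> :: "real \<times> 'a \<Rightarrow> real"
  assume bl: "bi_lipschitz_homeo \<phi>" and pl: "preserves_lebesgue \<phi>"
    and bm: "\<beta> \<in> borel_measurable halfspace" and Lf: "Linf_norm \<beta> < \<infinity>"
    and Nf: "carleson_norm (mu_beta \<beta>) < \<infinity>"
    and hyp: "(Linf_norm \<beta>)\<^sup>2 \<le> ereal A * enn2ereal (carleson_norm (mu_beta \<beta>))"
  define C where "C = A + 10 ^ DIM('a) / ln 2"
  define K where "K = K_const \<phi>"
  have K2: "K \<ge> 2" using K_facts(1)[OF bl] unfolding K_def .
  have lnK: "ln K \<ge> ln 2" using K2 by simp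
  have ln2: "ln (2::real) > 0" by simp
  define n where "n = enn2real (carleson_norm (mu_beta \<beta>))"
  have n: "carleson_norm (mu_beta \<beta>) = ennreal n" "n \<ge> 0"
    using Nf unfolding n_def by (auto simp: less_top ennreal_enn2real)
  define L where "L = Linf_norm \<beta>"
  define M where "M = max 0 (real_of_ereal L)"
  have M0: "M \<ge> 0" unfolding M_def by simp
  have AE1: "AE p in halfspace. ereal \<bar>\<beta> p\<bar> \<le> L"
    unfolding L_def Linf_norm_def by (rule esssup_AE)
  have AE2: "AE p in halfspace. \<bar>\<beta> p\<bar> \<le> M"
    using AE1
  proof (rule eventually_mono)
    fix p assume h: "ereal \<bar>\<beta> p\<bar> \<le> L"
    hence "L \<noteq> -\<infinity>" by auto
    moreover have "L < \<infinity>" using Lf by (simp add: L_def)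
    ultimately have "L = ereal (real_of_ereal L)" by (cases L) auto
    hence "\<bar>\<beta> p\<bar> \<le> real_of_ereal L" using h by (metis ereal_less_eq(3))
    thus "\<bar>\<beta> p\<bar> \<le> M" unfolding M_def by simp
  qed
  have MA: "M\<^sup>2 \<le> A * n"
  proof (cases "real_of_ereal L \<le> 0")
    case True
    hence "M = 0" unfolding M_def by simp
    thus ?thesis using assms n(2) by simp
  next
    case False
    then obtain l where l: "L = ereal l" "l > 0" by (cases L) auto
    have "ereal (l\<^sup>2) \<le> ereal (A * n)"
      using hyp n unfolding L_def[symmetric] l by (simp add: power2_eq_square enn2ereal_ennreal)
    moreover have "M = l" using l unfolding M_def by simp
    ultimately show ?thesis by simp
  qed
  have bound: "M\<^sup>2 * ln K + 10 ^ DIM('a) * n \<le> C * ln K * n"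
  proof -
    have "M\<^sup>2 * ln K \<le> A * n * ln K" using MA lnK ln2 by (intro mult_right_mono) linarith+
    moreover have "10 ^ DIM('a) * n \<le> 10 ^ DIM('a) / ln 2 * ln K * n"
    proof -
      have "1 \<le> ln K / ln 2" using lnK ln2 by simp
      hence "10 ^ DIM('a) * n * 1 \<le> 10 ^ DIM('a) * n * (ln K / ln 2)"
        using n(2) by (intro mult_left_mono) auto
      thus ?thesis by (simp add: mult_ac)
    qed
    ultimately show ?thesis unfolding C_def by (simp add: algebra_simps)
  qed
  have C0: "C \<ge> 0" unfolding C_def using assms ln2 by (simp add: add_nonneg_nonneg)
  have key: "emeasure (mu_beta (\<lambda>(t,x). \<beta> (t, \<phi> x))) (tent c r) / emeasure lebesgue (ball c r)
        \<le> ennreal (C * ln K) * ennreal n" if r0: "r > 0" for c :: 'a and r :: real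
  proof -
    have cr: "r > 0" by (rule r0)
    define v where "v = unit_ball_vol (DIM('a)) * r ^ DIM('a)"
    have v: "v > 0" unfolding v_def using cr by simp
    have bv: "emeasure lborel (ball c r) = ennreal v" unfolding v_def by (rule ball_vol) (use cr in simp)
    have "emeasure (mu_beta (\<lambda>(t,x). \<beta> (t, \<phi> x))) (tent c r)
      \<le> ennreal (M\<^sup>2 * ln K + 10 ^ DIM('a) * n) * emeasure lborel (ball c r)"
      unfolding K_def by (rule main_local[OF bl pl bm M0 AE2 n cr])
    also have "\<dots> \<le> ennreal (C * ln K) * ennreal n * ennreal v"
    proof -
      have "ennreal (M\<^sup>2 * ln K + 10 ^ DIM('a) * n) \<le> ennreal (C * ln K * n)"
        using bound by (rule ennreal_leI)
      also have "\<dots> = ennreal (C * ln K) * ennreal n"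
      proof -
        have "0 \<le> ln K" using lnK ln2 by linarith
        hence "0 \<le> C * ln K" using C0 by simp
        thus ?thesis using n(2) by (subst ennreal_mult) auto
      qed
      finally show ?thesis unfolding bv by (rule mult_right_mono) simp
    qed
    finally have "emeasure (mu_beta (\<lambda>(t,x). \<beta> (t, \<phi> x))) (tent c r) / ennreal v
        \<le> ennreal (C * ln K) * ennreal n"
      using ennreal_div_le_iff[OF v] by blast
    moreover have "emeasure lebesgue (ball c r) = ennreal v" using bv by simp
    ultimately show ?thesis by simp
  qed
  show "carleson_norm (mu_beta (\<lambda>(t,x). \<beta> (t, \<phi> x)))
      \<le> ennreal ((A + 10 ^ DIM('a) / ln 2) * ln (K_const \<phi>)) * carleson_norm (mu_beta \<beta>)"
  proof -
    have "carleson_norm (mu_beta (\<lambda>(t,x). \<beta> (t, \<phi> x))) \<le> ennreal (C * ln K) * ennreal n"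
      unfolding carleson_norm_def by (rule SUP_least) (clarify, rule key, simp)
    thus ?thesis unfolding C_def K_def n(1) .
  qed
qed


end
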